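(* If $(A,W)$ is a Pratt comonoid, then $W$ is closed under forming unions of pairwise disjoint families (of arbitrary cardinality) of its members.
   Context: A Pratt comonoid is a pair $(A,W)$ where $A$ is a set and $W$ is a set of subsets of $A$ such that (i) $\emptyset\in W$ and $A\in W$; (ii) whenever $C\subseteq A\times A$ is such that for every $a\in A$ both the $a$-th row $\{b\mid (a,b)\in C\}$ and the $a$-th column $\{b\mid (b,a)\in C\}$ belong to $W$ (a crossword over $W$), the diagonal $\{b\mid (b,b)\in C\}$ also belongs to $W$. *)

theory Defs
  imports Main
begin

definition crossword :: "'a set \<Rightarrow> 'a set set \<Rightarrow> ('a \<times> 'a) set \<Rightarrow> bool" where
  "crossword A W C \<longleftrightarrow> C \<subseteq> A \<times> A \<and>
     (\<forall>a\<in>A. {b. (a, b) \<in> C} \<in> W \<and> {b. (b, a) \<in> C} \<in> W)"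

definition pratt_comonoid :: "'a set \<Rightarrow> 'a set set \<Rightarrow> bool" where
  "pratt_comonoid A W \<longleftrightarrow> W \<subseteq> Pow A \<and> {} \<in> W \<and> A \<in> W \<and>
     (\<forall>C. crossword A W C \<longrightarrow> {b. (b, b) \<in> C} \<in> W)"

end

theory Submission
  imports Defs
begin

theorem corollary4p2:
  fixes A :: "'a set" and W :: "'a set set" and F :: "'a set set"
  assumes "pratt_comonoid A W"
    and "F \<subseteq> W"
    and "\<forall>X\<in>F. \<forall>Y\<in>F. X \<noteq> Y \<longrightarrow> X \<inter> Y = {}"
  shows "\<Union>F \<in> W"
proof -
  define C where "C = (\<Union>X\<in>F. X \<times> X)"
  have P: "W \<subseteq> Pow A" "{} \<in> W" "\<And>C. crossword A W C \<Longrightarrow> {b. (b, b) \<in> C} \<in> W"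
    using assms(1) unfolding pratt_comonoid_def by auto
  have row: "{b. (a, b) \<in> C} \<in> W \<and> {b. (b, a) \<in> C} \<in> W" for a
  proof (cases "\<exists>X\<in>F. a \<in> X")
    case True
    then obtain X where X: "X \<in> F" "a \<in> X" by blast
    have "{b. (a, b) \<in> C} = X" "{b. (b, a) \<in> C} = X"
      using X assms(3) unfolding C_def by blast+
    then show ?thesis using X assms(2) by auto
  next
    case False
    then have "{b. (a, b) \<in> C} = {}" "{b. (b, a) \<in> C} = {}" unfolding C_def by auto
    then show ?thesis using P(2) by simp
  qed
  have "C \<subseteq> A \<times> A" using assms(2) P(1) unfolding C_def by blast
  then have "crossword A W C" using row unfolding crossword_def by blast
  then have "{b. (b, b) \<in> C} \<in> W" by (rule P(3))
  moreover have "{b. (b, b) \<in> C} = \<Union>F" unfolding C_def by blast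
  ultimately show ?thesis by simp
qed

end
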